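(* Let $\mathfrak{r}$ be a totally real subspace of $\mathfrak{g}_\alpha$ of dimension $r$, let $H$ be the connected Lie subgroup of $AN$ with Lie algebra $\mathfrak{a}\oplus\mathfrak{r}$, and let $W\in\mathfrak{g}_\alpha\ominus(\mathfrak{r}\oplus J\mathfrak{r})$, $y\in\mathbb{R}$. Then the mean curvature vector $\mathcal{H}$ and the second fundamental form $\mathrm{II}$ of the orbit $H\cdot\operatorname{Exp}(2W+yZ)(o)$ satisfy $$\lVert\mathcal{H}\rVert^2-\lVert\mathrm{II}\rVert^2=\frac{r(1+r)(y^2+\lVert W\rVert^2)}{4(1+y^2+\lVert W\rVert^2)},$$ $$(r+1)\lVert\mathrm{II}\rVert^2-\lVert\mathcal{H}\rVert^2=\frac{ry^2\bigl((3+2r)(1+y^2)+2(3+r)\lVert W\rVert^2\bigr)}{4(1+y^2+\lVert W\rVert^2)^2}.$$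
   Context: $\mathbb{C}H^n$ is the complex hyperbolic space of constant holomorphic sectional curvature $-1$; $G=SU(1,n)$, $o\in\mathbb{C}H^n$ fixed with stabilizer $K$, Cartan decomposition $\mathfrak{g}=\mathfrak{k}\oplus\mathfrak{p}$, $\mathfrak{a}\subset\mathfrak{p}$ maximal abelian ($1$-dimensional), restricted roots $\pm\alpha,\pm2\alpha$ with $\alpha,2\alpha$ positive, root spaces $\mathfrak{g}_\lambda$, $\mathfrak{n}=\mathfrak{g}_\alpha\oplus\mathfrak{g}_{2\alpha}$, $AN$ the connected subgroup with Lie algebra $\mathfrak{a}\oplus\mathfrak{n}$, acting simply transitively on $\mathbb{C}H^n$. $\mathfrak{a}\oplus\mathfrak{n}$ carries an inner product and complex structure $J$ (with $J\mathfrak{g}_\alpha=\mathfrak{g}_\alpha$, $J\mathfrak{a}=\mathfrak{g}_{2\alpha}$) making $AN$ with left-invariant metric holomorphically isometric to $\mathbb{C}H^n$; $B\in\mathfrak{a}$ is a unit vector and $Z=JB$. $\operatorname{Exp}$ is the Lie exponential of $AN$; $\ominus$ is orthogonal complement. A subspace $W\subset\mathfrak{g}_\alpha$ is totally real if $JW\perp W$. The mean curvature vector is the trace of $\mathrm{II}$. *)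

theory Defs
  imports "HOL-Analysis.Analysis"
begin

text \<open>
Model of the solvable Iwasawa group AN of SU(1,n), acting simply transitively on
complex hyperbolic space CH^n (holomorphic sectional curvature -1), through its
metric Lie algebra  s = a + g_alpha + g_2alpha = R B + V + R Z,  represented as
the product type real * V * real with the product inner product
<aB+U+xZ, bB+V+yZ> = ab + <U,V> + xy.  Here V = g_alpha is a real inner product
space with a Hermitian complex structure J (a parameter), and
[aB+U+xZ, bB+V+yZ] = -(b/2)U + (a/2)V + (<JU,V> - bx + ay) Z.
\<close>

type_synonym 'v san = "real \<times> 'v \<times> real"

definition is_hermitian_cs :: "('v::real_inner \<Rightarrow> 'v) \<Rightarrow> bool" where
  "is_hermitian_cs J \<longleftrightarrow> linear J \<and> (\<forall>u. J (J u) = - u) \<and> (\<forall>u v. J u \<bullet> J v = u \<bullet> v)"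

definition an_B :: "'v::real_vector san" where
  "an_B = (1, 0, 0)"

definition an_J :: "('v \<Rightarrow> 'v) \<Rightarrow> 'v::real_vector san \<Rightarrow> 'v san" where
  "an_J J X = (case X of (a, U, x) \<Rightarrow> (- x, J U, a))"

definition an_Z :: "('v::real_vector \<Rightarrow> 'v) \<Rightarrow> 'v san" where
  "an_Z J = an_J J an_B"

definition an_bracket :: "('v \<Rightarrow> 'v) \<Rightarrow> 'v::real_inner san \<Rightarrow> 'v san \<Rightarrow> 'v san" where
  "an_bracket J X Y = (case X of (a, U, x) \<Rightarrow> case Y of (b, V, y) \<Rightarrow>
      (0, (a / 2) *\<^sub>R V - (b / 2) *\<^sub>R U, (J U \<bullet> V) - b * x + a * y))"

text \<open>Levi-Civita connection of the left-invariant metric on left-invariant fields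
(Koszul formula), expanded in the orthonormal basis of s.\<close>
definition lc_conn :: "('v \<Rightarrow> 'v) \<Rightarrow> 'v::euclidean_space san \<Rightarrow> 'v san \<Rightarrow> 'v san" where
  "lc_conn J X Y = (\<Sum>E\<in>Basis. ((an_bracket J X Y \<bullet> E - an_bracket J Y E \<bullet> X
       + an_bracket J E X \<bullet> Y) / 2) *\<^sub>R E)"

text \<open>Ad(Exp(-xi)) = exp(- ad xi), as the exponential power series.\<close>
definition Ad_exp_neg :: "('v \<Rightarrow> 'v) \<Rightarrow> 'v::euclidean_space san \<Rightarrow> 'v san \<Rightarrow> 'v san" where
  "Ad_exp_neg J xi v = (\<Sum>k. (1 / fact k) *\<^sub>R (((\<lambda>u. - an_bracket J xi u) ^^ k) v))"

definition lie_a_plus :: "'v::real_vector set \<Rightarrow> 'v san set" where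
  "lie_a_plus R = {(a, U, 0) | a U. U \<in> R}"

text \<open>The orbit H . Exp(xi)(o) is mapped by the isometry of left translation by
Exp(xi)^(-1) onto the orbit through o of the conjugate subgroup
Exp(-xi) H Exp(xi), whose Lie algebra is Ad(Exp(-xi))(h).  Its tangent space at o
(identified with s) is therefore the following subspace.\<close>
definition orbit_tangent :: "('v \<Rightarrow> 'v) \<Rightarrow> 'v::euclidean_space san set \<Rightarrow> 'v san \<Rightarrow> 'v san set" where
  "orbit_tangent J h xi = Ad_exp_neg J xi ` h"

definition orthonormal_basis_of :: "'a::real_inner set \<Rightarrow> 'a set \<Rightarrow> bool" where
  "orthonormal_basis_of E S \<longleftrightarrow> finite E \<and> E \<subseteq> S \<and> span E = S \<and> pairwise orthogonal E
      \<and> (\<forall>e\<in>E. norm e = 1)"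

definition nproj :: "'a::real_inner set \<Rightarrow> 'a \<Rightarrow> 'a" where
  "nproj E v = v - (\<Sum>e\<in>E. (v \<bullet> e) *\<^sub>R e)"

text \<open>Second fundamental form of the orbit of a subgroup through o, on left-invariant
tangent fields: II(X,Y) = (nabla_X Y)^perp.\<close>
definition sff :: "('v \<Rightarrow> 'v) \<Rightarrow> 'v::euclidean_space san set \<Rightarrow> 'v san \<Rightarrow> 'v san \<Rightarrow> 'v san" where
  "sff J E X Y = nproj E (lc_conn J X Y)"

definition mean_curv :: "('v \<Rightarrow> 'v) \<Rightarrow> 'v::euclidean_space san set \<Rightarrow> 'v san" where
  "mean_curv J E = (\<Sum>e\<in>E. sff J E e e)"

definition sff_norm2 :: "('v \<Rightarrow> 'v) \<Rightarrow> 'v::euclidean_space san set \<Rightarrow> real" where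
  "sff_norm2 J E = (\<Sum>e\<in>E. \<Sum>e'\<in>E. (norm (sff J E e e'))\<^sup>2)"

end

theory Submission
  imports Defs
begin



lemma herm:
  assumes "is_hermitian_cs J"
  shows "linear J" "\<And>u. J (J u) = - u" "\<And>u v. J u \<bullet> J v = u \<bullet> v"
    "\<And>u v. J u \<bullet> v = - (u \<bullet> J v)" "\<And>u. J u \<bullet> u = 0" "\<And>u. u \<bullet> J u = 0"
    "\<And>u v. J (u + v) = J u + J v" "\<And>c u. J (c *\<^sub>R u) = c *\<^sub>R J u" "J 0 = 0"
proof -
  show l: "linear J" using assms by (simp add: is_hermitian_cs_def)
  show jj: "\<And>u. J (J u) = - u" using assms by (simp add: is_hermitian_cs_def)
  show ii: "\<And>u v. J u \<bullet> J v = u \<bullet> v" using assms by (simp add: is_hermitian_cs_def)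
  show sk: "\<And>u v. J u \<bullet> v = - (u \<bullet> J v)"
  proof -
    fix u v
    have "u \<bullet> J v = J u \<bullet> J (J v)" using ii by simp
    also have "\<dots> = - (J u \<bullet> v)" using jj by simp
    finally show "J u \<bullet> v = - (u \<bullet> J v)" by simp
  qed
  show "\<And>u. J u \<bullet> u = 0" using sk by (metis add.inverse_unique inner_commute neg_equal_zero add_eq_0_iff2 add_right_cancel)
  then show "\<And>u. u \<bullet> J u = 0" by (simp add: inner_commute)
  show "\<And>u v. J (u + v) = J u + J v" using l by (simp add: linear_add)
  show "\<And>c u. J (c *\<^sub>R u) = c *\<^sub>R J u" using l by (simp add: linear_scale)
  show "J 0 = 0" using l by (simp add: linear_0)
qed

definition lcf :: "('v \<Rightarrow> 'v) \<Rightarrow> 'v::real_inner san \<Rightarrow> 'v san \<Rightarrow> 'v san" where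
  "lcf J X Y = (case X of (a, U, x) \<Rightarrow> case Y of (b, V, z) \<Rightarrow>
     ((U \<bullet> V + 2 * x * z) / 2, (-1/2) *\<^sub>R (b *\<^sub>R U + x *\<^sub>R J V + z *\<^sub>R J U), (J U \<bullet> V - 2 * b * x) / 2))"

lemma koszul_eq:
  assumes "is_hermitian_cs J"
  shows "(an_bracket J X Y \<bullet> E - an_bracket J Y E \<bullet> X + an_bracket J E X \<bullet> Y) / 2 = lcf J X Y \<bullet> E"
proof -
  obtain a U x where X: "X = (a, U, x)" by (cases X) auto
  obtain b V z where Y: "Y = (b, V, z)" by (cases Y) auto
  obtain c S w where E: "E = (c, S, w)" by (cases E) auto
  note h = herm[OF assms]
  have 1: "J S \<bullet> U = - (S \<bullet> J U)" by (rule h(4))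
  have 2: "J V \<bullet> S = S \<bullet> J V" by (simp add: inner_commute)
  show ?thesis unfolding X Y E an_bracket_def lcf_def
    by (simp add: 1 2 inner_add_left inner_add_right inner_diff_left inner_diff_right
        algebra_simps inner_commute[of V U] inner_commute[of S U] inner_commute[of S V] inner_commute[of "J U" S] field_simps)
qed

lemma lc_conn_eq:
  assumes "is_hermitian_cs J"
  shows "lc_conn J X Y = lcf J X Y"
  unfolding lc_conn_def koszul_eq[OF assms] by (rule euclidean_representation)




lemma xi_eq: assumes "is_hermitian_cs J"
  shows "2 *\<^sub>R (0, W, 0) + y *\<^sub>R an_Z J = (0::real, 2 *\<^sub>R W, y)"
  using herm(9)[OF assms] by (simp add: an_Z_def an_J_def an_B_def)

lemma Ad_eq:
  assumes hJ: "is_hermitian_cs J" and U: "J W \<bullet> U = 0"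
  shows "Ad_exp_neg J (0, 2 *\<^sub>R W, y) (a, U, 0) = (a, U + a *\<^sub>R W, a * y)"
proof -
  note h = herm[OF hJ]
  define f where "f = (\<lambda>u. - an_bracket J (0, 2 *\<^sub>R W, y) u)"
  have f1: "f (a, U, 0) = (0, a *\<^sub>R W, a * y)"
    using U h unfolding f_def by (simp add: an_bracket_def)
  have f2: "f (0, a *\<^sub>R W, a * y) = 0"
    using h unfolding f_def by (simp add: an_bracket_def zero_prod_def)
  have f0: "f 0 = 0" using h unfolding f_def by (simp add: an_bracket_def zero_prod_def)
  have z0: "(f ^^ k) 0 = 0" for k by (induct k) (simp_all add: f0)
  have fk: "(f ^^ k) (a, U, 0) = 0" if "k \<ge> 2" for k
  proof -
    define m where "m = k - 2"
    have k: "k = m + 2" using that by (simp add: m_def)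
    have "(f ^^ k) (a, U, 0) = (f ^^ m) ((f ^^ 2) (a, U, 0))" unfolding k funpow_add by simp
    also have "\<dots> = 0" using f1 f2 z0 by (simp add: numeral_2_eq_2)
    finally show ?thesis .
  qed
  have "Ad_exp_neg J (0, 2 *\<^sub>R W, y) (a, U, 0) = (\<Sum>k\<in>{..<2}. (1 / fact k) *\<^sub>R ((f ^^ k) (a, U, 0)))"
    unfolding Ad_exp_neg_def f_def[symmetric]
    by (rule suminf_finite) (auto simp: fk)
  also have "\<dots> = (a, U + a *\<^sub>R W, a * y)"
    by (simp add: numeral_2_eq_2 f1)
  finally show ?thesis .
qed
lemma tangent_eq:
  assumes hJ: "is_hermitian_cs J" and W: "\<forall>u\<in>R. W \<bullet> u = 0 \<and> W \<bullet> J u = 0"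
  shows "orbit_tangent J (lie_a_plus R) (2 *\<^sub>R (0, W, 0) + y *\<^sub>R an_Z J)
     = {(a, U + a *\<^sub>R W, a * y) | a U. U \<in> R}"
proof -
  have "J W \<bullet> U = 0" if "U \<in> R" for U using W that herm(4)[OF hJ] by auto
  then show ?thesis
    unfolding orbit_tangent_def lie_a_plus_def xi_eq[OF hJ]
  proof (intro equalityI subsetI)
    fix X assume "X \<in> Ad_exp_neg J (0, 2 *\<^sub>R W, y) ` {(a, U, 0) |a U. U \<in> R}"
    then obtain a U where "U \<in> R" "X = Ad_exp_neg J (0, 2 *\<^sub>R W, y) (a, U, 0)" by blast
    then show "X \<in> {(a, U + a *\<^sub>R W, a * y) |a U. U \<in> R}"
      using Ad_eq[OF hJ] \<open>\<And>U. U \<in> R \<Longrightarrow> J W \<bullet> U = 0\<close> by blast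
  next
    fix X assume "X \<in> {(a, U + a *\<^sub>R W, a * y) |a U. U \<in> R}"
    then obtain a U where "U \<in> R" "X = (a, U + a *\<^sub>R W, a * y)" by blast
    then show "X \<in> Ad_exp_neg J (0, 2 *\<^sub>R W, y) ` {(a, U, 0) |a U. U \<in> R}"
      using Ad_eq[OF hJ] \<open>\<And>U. U \<in> R \<Longrightarrow> J W \<bullet> U = 0\<close>
      by (metis (mono_tags, lifting) image_eqI mem_Collect_eq)
  qed
qed




lemma onb_inner:
  assumes "orthonormal_basis_of E S" "e \<in> E" "e' \<in> E"
  shows "e \<bullet> e' = (if e = e' then 1 else 0)"
proof -
  have n: "norm e = 1" using assms by (auto simp: orthonormal_basis_of_def)
  show ?thesis
  proof (cases "e = e'")
    case True
    then show ?thesis using n by (simp add: norm_eq_1)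
  next
    case False
    then show ?thesis using assms by (auto simp: orthonormal_basis_of_def pairwise_def orthogonal_def)
  qed
qed

lemma onb_expand:
  assumes E: "orthonormal_basis_of E S" and x: "x \<in> S"
  shows "x = (\<Sum>e\<in>E. (x \<bullet> e) *\<^sub>R e)"
proof -
  have fin: "finite E" and sp: "span E = S" using E by (auto simp: orthonormal_basis_of_def)
  obtain u where xu: "x = (\<Sum>v\<in>E. u v *\<^sub>R v)" using x sp span_finite[OF fin] by auto
  have "x \<bullet> e = u e" if "e \<in> E" for e
  proof -
    have "x \<bullet> e = (\<Sum>v\<in>E. u v * (v \<bullet> e))" unfolding xu by (simp add: inner_sum_left)
    also have "\<dots> = (\<Sum>v\<in>E. if v = e then u v else 0)"
      by (rule sum.cong) (auto simp: onb_inner[OF E _ that])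
    also have "\<dots> = u e" using fin that by simp
    finally show ?thesis .
  qed
  then show ?thesis using xu by simp
qed

lemma onb_sum_inner:
  assumes E: "orthonormal_basis_of E S" and F: "orthonormal_basis_of F S" and f: "f \<in> F"
  shows "(\<Sum>e\<in>E. (v \<bullet> e) * (e \<bullet> f)) = v \<bullet> f"
proof -
  have "f \<in> S" using F f by (auto simp: orthonormal_basis_of_def)
  then have "f = (\<Sum>e\<in>E. (f \<bullet> e) *\<^sub>R e)" by (rule onb_expand[OF E])
  then have "v \<bullet> f = v \<bullet> (\<Sum>e\<in>E. (f \<bullet> e) *\<^sub>R e)" by simp
  also have "\<dots> = (\<Sum>e\<in>E. (v \<bullet> e) * (e \<bullet> f))"
    by (simp add: inner_sum_right inner_commute mult.commute)
  finally show ?thesis by simp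
qed

lemma nproj_eq:
  assumes E: "orthonormal_basis_of E S" and F: "orthonormal_basis_of F S"
  shows "nproj E v = nproj F v"
proof -
  have finE: "finite E" and finF: "finite F" using E F by (auto simp: orthonormal_basis_of_def)
  have "(\<Sum>e\<in>E. (v \<bullet> e) *\<^sub>R e) = (\<Sum>e\<in>E. (v \<bullet> e) *\<^sub>R (\<Sum>f\<in>F. (e \<bullet> f) *\<^sub>R f))"
    by (rule sum.cong[OF refl]) (metis E F onb_expand orthonormal_basis_of_def subsetD)
  also have "\<dots> = (\<Sum>f\<in>F. (\<Sum>e\<in>E. (v \<bullet> e) * (e \<bullet> f)) *\<^sub>R f)"
    by (simp add: scaleR_sum_right scaleR_sum_left sum.swap[of _ E F])
  also have "\<dots> = (\<Sum>f\<in>F. (v \<bullet> f) *\<^sub>R f)"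
    by (rule sum.cong[OF refl]) (simp add: onb_sum_inner[OF E F])
  finally show ?thesis by (simp add: nproj_def)
qed

lemma trace_inv:
  fixes \<beta> :: "'a::real_inner \<Rightarrow> 'a \<Rightarrow> 'b::real_vector"
  assumes E: "orthonormal_basis_of E S" and F: "orthonormal_basis_of F S"
    and l1: "\<And>x. linear (\<beta> x)" and l2: "\<And>y. linear (\<lambda>x. \<beta> x y)"
  shows "(\<Sum>e\<in>E. \<beta> e e) = (\<Sum>f\<in>F. \<beta> f f)"
proof -
  have finE: "finite E" and finF: "finite F" using E F by (auto simp: orthonormal_basis_of_def)
  have ex: "e = (\<Sum>f\<in>F. (e \<bullet> f) *\<^sub>R f)" if "e \<in> E" for e
    by (metis E F onb_expand orthonormal_basis_of_def subsetD that)
  have s2: "\<beta> (\<Sum>f\<in>F. g f) z = (\<Sum>f\<in>F. \<beta> (g f) z)" for g z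
    using linear_sum[OF l2, of g F z] by simp
  have s1: "\<beta> z (\<Sum>f\<in>F. g f) = (\<Sum>f\<in>F. \<beta> z (g f))" for g z
    using linear_sum[OF l1[of z], of g F] by simp
  have c2: "\<beta> (c *\<^sub>R x) z = c *\<^sub>R \<beta> x z" for c x z
    using linear_scale[OF l2[of z]] by simp
  have c1: "\<beta> z (c *\<^sub>R x) = c *\<^sub>R \<beta> z x" for c x z
    using linear_scale[OF l1[of z]] by simp
  have "\<beta> e e = (\<Sum>f\<in>F. \<Sum>f'\<in>F. ((e \<bullet> f) * (e \<bullet> f')) *\<^sub>R \<beta> f f')" if "e \<in> E" for e
  proof -
    have "\<beta> e e = \<beta> (\<Sum>f\<in>F. (e \<bullet> f) *\<^sub>R f) (\<Sum>f'\<in>F. (e \<bullet> f') *\<^sub>R f')"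
      using ex[OF that] by metis
    also have "\<dots> = (\<Sum>f\<in>F. (e \<bullet> f) *\<^sub>R \<beta> f (\<Sum>f'\<in>F. (e \<bullet> f') *\<^sub>R f'))"
      by (simp add: s2 c2)
    also have "\<dots> = (\<Sum>f\<in>F. (e \<bullet> f) *\<^sub>R (\<Sum>f'\<in>F. (e \<bullet> f') *\<^sub>R \<beta> f f'))"
      by (simp add: s1 c1)
    also have "\<dots> = (\<Sum>f\<in>F. \<Sum>f'\<in>F. ((e \<bullet> f) * (e \<bullet> f')) *\<^sub>R \<beta> f f')"
      by (simp add: scaleR_sum_right)
    finally show ?thesis .
  qed
  then have "(\<Sum>e\<in>E. \<beta> e e) = (\<Sum>e\<in>E. \<Sum>f\<in>F. \<Sum>f'\<in>F. ((e \<bullet> f) * (e \<bullet> f')) *\<^sub>R \<beta> f f')"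
    by simp
  also have "\<dots> = (\<Sum>f\<in>F. \<Sum>f'\<in>F. (\<Sum>e\<in>E. (f \<bullet> e) * (e \<bullet> f')) *\<^sub>R \<beta> f f')"
    by (simp add: sum.swap[of _ E F] sum.swap[of _ E] scaleR_sum_left inner_commute)
  also have "\<dots> = (\<Sum>f\<in>F. \<Sum>f'\<in>F. (if f = f' then 1 else 0) *\<^sub>R \<beta> f f')"
    by (intro sum.cong refl) (simp add: onb_sum_inner[OF E F] onb_inner[OF F])
  also have "\<dots> = (\<Sum>f\<in>F. \<Sum>f'\<in>F. if f = f' then \<beta> f f' else 0)"
    by (intro sum.cong refl) simp
  also have "\<dots> = (\<Sum>f\<in>F. \<beta> f f)"
    using finF by simp
  finally show ?thesis .
qed

lemma linear_nproj: "finite E \<Longrightarrow> linear (nproj E)"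
  unfolding nproj_def
  by (intro linearI) (simp_all add: inner_add_left scaleR_add_left sum.distrib scaleR_sum_right algebra_simps)

lemma sff_inv:
  fixes B :: "'a::real_inner \<Rightarrow> 'a \<Rightarrow> 'b::real_inner"
  assumes E: "orthonormal_basis_of E S" and F: "orthonormal_basis_of F S"
    and l1: "\<And>x. linear (B x)" and l2: "\<And>y. linear (\<lambda>x. B x y)"
  shows "(\<Sum>e\<in>E. \<Sum>e'\<in>E. (norm (B e e'))\<^sup>2) = (\<Sum>f\<in>F. \<Sum>f'\<in>F. (norm (B f f'))\<^sup>2)"
proof -
  have lin: "linear (\<lambda>x. L x \<bullet> L' y)" if "linear L" for L L' y
    using that by (intro linearI) (simp_all add: linear_add linear_scale inner_add_left)
  have lin2: "linear (\<lambda>y. L x \<bullet> L' y)" if "linear L'" for L L' x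
    using that by (intro linearI) (simp_all add: linear_add linear_scale inner_add_right)
  have "(\<Sum>e\<in>E. \<Sum>e'\<in>E. (norm (B e e'))\<^sup>2) = (\<Sum>e\<in>E. \<Sum>f'\<in>F. (norm (B e f'))\<^sup>2)"
    unfolding power2_norm_eq_inner
    by (intro sum.cong refl trace_inv[OF E F] lin lin2 l1)
  also have "\<dots> = (\<Sum>f'\<in>F. \<Sum>e\<in>E. (norm (B e f'))\<^sup>2)" by (rule sum.swap)
  also have "\<dots> = (\<Sum>f'\<in>F. \<Sum>f\<in>F. (norm (B f f'))\<^sup>2)"
    unfolding power2_norm_eq_inner
    by (intro sum.cong refl trace_inv[OF E F] lin lin2 l2)
  also have "\<dots> = (\<Sum>f\<in>F. \<Sum>f'\<in>F. (norm (B f f'))\<^sup>2)" by (rule sum.swap)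
  finally show ?thesis .
qed




lemma lcf_lin1:
  assumes "is_hermitian_cs J"
  shows "linear (lcf J X)"
proof (rule linearI)
  note h = herm[OF assms]
  fix Y1 Y2 :: "'a san" and c :: real
  show "lcf J X (Y1 + Y2) = lcf J X Y1 + lcf J X Y2"
    by (cases X; cases Y1; cases Y2) (simp add: lcf_def h inner_add_right inner_add_left field_simps; simp add: add_divide_distrib scaleR_add_left)
  show "lcf J X (c *\<^sub>R Y1) = c *\<^sub>R lcf J X Y1"
    by (cases X; cases Y1) (simp add: lcf_def h algebra_simps)
qed

lemma lcf_lin2:
  assumes "is_hermitian_cs J"
  shows "linear (\<lambda>X. lcf J X Y)"
proof (rule linearI)
  note h = herm[OF assms]
  fix X1 X2 :: "'a san" and c :: real
  show "lcf J (X1 + X2) Y = lcf J X1 Y + lcf J X2 Y"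
    by (cases X1; cases X2; cases Y) (simp add: lcf_def h inner_add_right inner_add_left field_simps; simp add: add_divide_distrib scaleR_add_left)
  show "lcf J (c *\<^sub>R X1) Y = c *\<^sub>R lcf J X1 Y"
    by (cases X1; cases Y) (simp add: lcf_def h algebra_simps)
qed

lemma norm_WJW:
  assumes "is_hermitian_cs J"
  shows "(norm (p *\<^sub>R W + q *\<^sub>R J W))\<^sup>2 = (p\<^sup>2 + q\<^sup>2) * (W \<bullet> W)"
proof -
  note h = herm[OF assms]
  have "(norm (p *\<^sub>R W + q *\<^sub>R J W))\<^sup>2 = (p *\<^sub>R W + q *\<^sub>R J W) \<bullet> (p *\<^sub>R W + q *\<^sub>R J W)"
    by (rule power2_norm_eq_inner)
  also have "\<dots> = (p\<^sup>2 + q\<^sup>2) * (W \<bullet> W)"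
    using h(3)[of W W] h(5)[of W] h(6)[of W]
    by (simp add: inner_add_left inner_add_right power2_eq_square algebra_simps)
  finally show ?thesis .
qed



lemma final_alg:
  fixes A y w r :: real
  assumes Ac: "A * (1 + y\<^sup>2 + w) = 1" and w: "w \<ge> 0"
  defines "nH \<equiv> (A * (w + 2 * y\<^sup>2) / 2 + r * (1/2 - A/2))\<^sup>2
            + ((A/2 * (1 + r))\<^sup>2 + (A * y)\<^sup>2) * w + (A * y + r * (A * y / 2))\<^sup>2"
    and "nII \<equiv> (A * (w + 2 * y\<^sup>2) / 2)\<^sup>2 + ((A/2)\<^sup>2 + (A * y)\<^sup>2) * w + (A * y)\<^sup>2
            + r * (A * y\<^sup>2 / 4) + r * (A * y\<^sup>2 / 4)
            + r * ((1/2 - A/2)\<^sup>2 + (A/2)\<^sup>2 * w + (A * y / 2)\<^sup>2)"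
  shows "nH - nII = r * (1 + r) * (y\<^sup>2 + w) / (4 * (1 + y\<^sup>2 + w))
       \<and> (r + 1) * nII - nH
           = r * y\<^sup>2 * ((3 + 2 * r) * (1 + y\<^sup>2) + 2 * (3 + r) * w) / (4 * (1 + y\<^sup>2 + w)\<^sup>2)"
proof -
  define c where "c = 1 + y\<^sup>2 + w"
  have cpos: "c > 0" using w by (simp add: add_pos_nonneg c_def)
  have wc: "w = c - 1 - y\<^sup>2" by (simp add: c_def)
  have A: "A = 1 / c" using Ac cpos by (simp add: c_def field_simps)
  have cnz: "c \<noteq> 0" using cpos by simp
  show ?thesis unfolding nH_def nII_def c_def[symmetric] unfolding A wc using cnz
    by (simp add: field_simps power2_eq_square)
qed



theorem corollary4p4:
  fixes J :: "'v::euclidean_space \<Rightarrow> 'v" and R :: "'v set" and r :: nat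
    and W :: 'v and y :: real and E :: "'v san set"
  assumes "is_hermitian_cs J"
    and "subspace R" and "dim R = r" and "\<forall>u\<in>R. \<forall>v\<in>R. J u \<bullet> v = 0"
    and "\<forall>u\<in>R. W \<bullet> u = 0 \<and> W \<bullet> J u = 0"
    and "orthonormal_basis_of E
           (orbit_tangent J (lie_a_plus R) (2 *\<^sub>R (0, W, 0) + y *\<^sub>R an_Z J))"
  shows "(norm (mean_curv J E))\<^sup>2 - sff_norm2 J E
           = real r * (1 + real r) * (y\<^sup>2 + (norm W)\<^sup>2) / (4 * (1 + y\<^sup>2 + (norm W)\<^sup>2))
       \<and> (real r + 1) * sff_norm2 J E - (norm (mean_curv J E))\<^sup>2
           = real r * y\<^sup>2 * ((3 + 2 * real r) * (1 + y\<^sup>2) + 2 * (3 + real r) * (norm W)\<^sup>2)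
             / (4 * (1 + y\<^sup>2 + (norm W)\<^sup>2)\<^sup>2)"
proof -
  note h = herm[OF assms(1)]
  have WR: "W \<bullet> u = 0" "W \<bullet> J u = 0" "J W \<bullet> u = 0" "u \<bullet> W = 0" if "u \<in> R" for u
    using assms(5) that h(4)[of W u] by (auto simp: inner_commute)
  have TR: "J u \<bullet> v = 0" if "u \<in> R" "v \<in> R" for u v using assms(4) that by auto
  obtain BR where BR: "BR \<subseteq> R" "pairwise orthogonal BR" "\<And>x. x \<in> BR \<Longrightarrow> norm x = 1"
    "independent BR" "card BR = dim R" "span BR = R"
    using orthonormal_basis_subspace[OF assms(2)] by blast
  have finBR: "finite BR" using BR(4) independent_imp_finite by blast
  have BRonb: "orthonormal_basis_of BR R"
    using BR finBR by (auto simp: orthonormal_basis_of_def)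
  have cardBR: "card BR = r" using BR(5) assms(3) by simp
  have BRin: "u \<bullet> v = (if u = v then 1 else 0)" if "u \<in> BR" "v \<in> BR" for u v
    using onb_inner[OF BRonb that] .
  define w where "w = W \<bullet> W"
  have nW: "(norm W)\<^sup>2 = w" by (simp add: w_def power2_norm_eq_inner)
  have w0: "w \<ge> 0" by (simp add: w_def)
  define c where "c = 1 + y\<^sup>2 + w"
  have cpos: "c > 0" using w0 by (simp add: add_pos_nonneg c_def)
  define a where "a = 1 / sqrt c"
  have apos: "a > 0" using cpos by (simp add: a_def)
  have a2: "a\<^sup>2 = 1 / c" using cpos by (simp add: a_def power_divide)
  have a2c: "a\<^sup>2 * c = 1" using a2 cpos by simp
  define t where "t = (a, a *\<^sub>R W, a * y)"
  define g where "g = (\<lambda>u::'v. (0::real, u, 0::real))"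
  have lin_g: "linear g" unfolding g_def by (intro linearI) simp_all
  have inj_g: "inj g" unfolding g_def by (auto intro: injI)
  have tnot: "t \<notin> g ` BR" using apos by (auto simp: t_def g_def)
  define F where "F = insert t (g ` BR)"
  define T where "T = {(b, U + b *\<^sub>R W, b * y) | b U. U \<in> R}"
  have finF: "finite F" using finBR by (simp add: F_def)
  have tt: "t \<bullet> t = 1"
    using a2c by (simp add: t_def w_def c_def power2_eq_square algebra_simps)
  have tg: "t \<bullet> g u = 0" if "u \<in> R" for u using WR[OF that] by (simp add: t_def g_def)
  have gg: "g u \<bullet> g v = u \<bullet> v" for u v by (simp add: g_def)
  have FT: "F \<subseteq> T"
  proof -
    have "t \<in> T" unfolding T_def t_def by (rule CollectI, rule exI[of _ a], rule exI[of _ 0]) (simp add: subspace_0[OF assms(2)])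
    moreover have "g u \<in> T" if "u \<in> BR" for u
      unfolding T_def g_def using that BR(1) by (intro CollectI exI[of _ 0] exI[of _ u]) auto
    ultimately show ?thesis by (auto simp: F_def)
  qed
  have spanF: "span F = T"
  proof -
    have "span F = {x. \<exists>k. x - k *\<^sub>R t \<in> g ` R}"
      unfolding F_def span_insert span_linear_image[OF lin_g] BR(6) ..
    also have "\<dots> = T"
    proof (intro equalityI subsetI)
      fix x assume "x \<in> {x. \<exists>k. x - k *\<^sub>R t \<in> g ` R}"
      then obtain k U where U: "U \<in> R" "x - k *\<^sub>R t = g U" by blast
      then have "x = (k * a, U + (k * a) *\<^sub>R W, (k * a) * y)"
        by (auto simp: t_def g_def prod_eq_iff algebra_simps)
      then show "x \<in> T" using U unfolding T_def by blast
    next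
      fix x assume "x \<in> T"
      then obtain b U where U: "U \<in> R" "x = (b, U + b *\<^sub>R W, b * y)" unfolding T_def by blast
      then have "x - (b / a) *\<^sub>R t = g U" using apos by (simp add: t_def g_def)
      then show "x \<in> {x. \<exists>k. x - k *\<^sub>R t \<in> g ` R}" using U by blast
    qed
    finally show ?thesis .
  qed
  have Fonb: "orthonormal_basis_of F T"
    unfolding orthonormal_basis_of_def
  proof (intro conjI ballI)
    show "finite F" "F \<subseteq> T" "span F = T" by (fact finF FT spanF)+
    show "pairwise orthogonal F"
      unfolding F_def pairwise_insert
      using BR(2) BR(1) tg tnot
      by (auto simp: pairwise_def orthogonal_def gg inner_commute[of "g _" t] inj_g[THEN inj_eq])
    fix e assume "e \<in> F"
    then show "norm e = 1" unfolding F_def using tt BR(3)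
      by (auto simp: norm_eq_1 gg[symmetric] simp del: inner_Pair)
  qed
  have Eonb: "orthonormal_basis_of E T"
    using assms(6) unfolding tangent_eq[OF assms(1) assms(5)] T_def .
  define N where "N = nproj F"
  have NE: "nproj E = N" unfolding N_def by (rule ext, rule nproj_eq[OF Eonb Fonb])
  define K where "K = lcf J"
  have lcK: "lc_conn J = K" unfolding K_def by (intro ext lc_conn_eq[OF assms(1)])
  have linN: "linear N" unfolding N_def by (rule linear_nproj[OF finF])
  have bil1: "linear (\<lambda>y. N (K x y))" for x
    unfolding K_def using linear_compose[OF lcf_lin1[OF assms(1)] linN] by (simp add: o_def)
  have bil2: "linear (\<lambda>x. N (K x y))" for y
    unfolding K_def using linear_compose[OF lcf_lin2[OF assms(1)] linN] by (simp add: o_def)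
  have sumF: "(\<Sum>f\<in>F. G f) = G t + (\<Sum>u\<in>BR. G (g u))" for G :: "_ \<Rightarrow> 'b::comm_monoid_add"
    unfolding F_def using finBR tnot by (simp add: sum.reindex inj_on_def inj_g[THEN inj_eq])
  have Hsum: "mean_curv J E = N (K t t) + (\<Sum>u\<in>BR. N (K (g u) (g u)))"
  proof -
    have "mean_curv J E = (\<Sum>e\<in>E. N (K e e))" unfolding mean_curv_def sff_def NE lcK ..
    also have "\<dots> = (\<Sum>f\<in>F. N (K f f))" by (rule trace_inv[OF Eonb Fonb bil1 bil2])
    finally show ?thesis by (simp add: sumF)
  qed
  have IIsum: "sff_norm2 J E = (norm (N (K t t)))\<^sup>2 + (\<Sum>v\<in>BR. (norm (N (K t (g v))))\<^sup>2)
      + (\<Sum>u\<in>BR. (norm (N (K (g u) t)))\<^sup>2 + (\<Sum>v\<in>BR. (norm (N (K (g u) (g v))))\<^sup>2))"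
  proof -
    have "sff_norm2 J E = (\<Sum>e\<in>E. \<Sum>e'\<in>E. (norm (N (K e e')))\<^sup>2)"
      unfolding sff_norm2_def sff_def NE lcK ..
    also have "\<dots> = (\<Sum>f\<in>F. \<Sum>f'\<in>F. (norm (N (K f f')))\<^sup>2)"
      by (rule sff_inv[OF Eonb Fonb bil1 bil2])
    finally show ?thesis by (simp add: sumF sum.distrib add.assoc)
  qed
  have Nform: "N p = p - (p \<bullet> t) *\<^sub>R t - (\<Sum>u\<in>BR. (p \<bullet> g u) *\<^sub>R g u)" for p
    unfolding N_def nproj_def by (simp add: sumF algebra_simps)
  have n3: "(norm ((x::real), V, (z::real)))\<^sup>2 = x\<^sup>2 + (norm V)\<^sup>2 + z\<^sup>2" for x V z
    by (simp add: norm_Pair)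
  have sum0: "(\<Sum>u\<in>BR. (p \<bullet> g u) *\<^sub>R g u) = 0" if "\<And>u. u \<in> BR \<Longrightarrow> p \<bullet> g u = 0" for p
    using that by simp
  have JWW: "J W \<bullet> W = 0" by (rule h(5))
  have Ktt: "K t t = (a\<^sup>2 * (w + 2 * y\<^sup>2) / 2, (-(a\<^sup>2/2)) *\<^sub>R W + (-(a\<^sup>2 * y)) *\<^sub>R J W, -(a\<^sup>2 * y))"
    apply (simp add: K_def lcf_def t_def h JWW w_def power2_eq_square algebra_simps)
    apply (simp only: scaleR_add_left[symmetric])
    apply simp
    done
  have NKtt: "N (K t t) = K t t"
  proof -
    have "K t t \<bullet> t = 0" unfolding Ktt
      by (simp add: t_def JWW w_def power2_eq_square algebra_simps inner_add_left)
    moreover have "K t t \<bullet> g u = 0" if "u \<in> BR" for u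
      using WR[OF subsetD[OF BR(1) that]] unfolding Ktt by (simp add: g_def inner_add_left inner_diff_left)
    ultimately show ?thesis by (simp add: Nform sum0)
  qed
  have NKgg: "N (K (g u) (g u)) = (1/2 - a\<^sup>2/2, (-(a\<^sup>2/2)) *\<^sub>R W, -(a\<^sup>2 * y / 2))" if "u \<in> BR" for u
  proof -
    have uu: "u \<bullet> u = 1" using BRin[OF that that] by simp
    have K: "K (g u) (g u) = (1/2, 0, 0)" using uu h(5)[of u] by (simp add: K_def lcf_def g_def)
    have "(1/2::real, 0::'v, 0::real) \<bullet> g v = 0" for v by (simp add: g_def)
    then show ?thesis unfolding K
      by (simp add: Nform sum0 t_def power2_eq_square)
  qed
  have NKgg0: "N (K (g u) (g v)) = 0" if "u \<in> BR" "v \<in> BR" "u \<noteq> v" for u v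
  proof -
    have "K (g u) (g v) = 0"
      using BRin[OF that(1,2)] that(3) TR[OF subsetD[OF BR(1) that(1)] subsetD[OF BR(1) that(2)]]
      by (simp add: K_def lcf_def g_def zero_prod_def)
    then show ?thesis using linear_0[OF linN] by simp
  qed
  have NKtg: "N (K t (g v)) = (0, (-(a * y / 2)) *\<^sub>R J v, 0)" if "v \<in> BR" for v
  proof -
    have vR: "v \<in> R" using BR(1) that by auto
    have K: "K t (g v) = (0, (-(a * y / 2)) *\<^sub>R J v, 0)"
      using WR[OF vR] by (simp add: K_def lcf_def g_def t_def h)
    have "(0::real, (-(a * y / 2)) *\<^sub>R J v, 0::real) \<bullet> t = 0"
      using WR[OF vR] h(4)[of v W] by (simp add: t_def inner_commute[of "J v" W])
    moreover have "(0::real, (-(a * y / 2)) *\<^sub>R J v, 0::real) \<bullet> g u = 0" if "u \<in> BR" for u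
      using TR[OF vR subsetD[OF BR(1) that]] by (simp add: g_def)
    ultimately show ?thesis unfolding K by (simp add: Nform sum0)
  qed
  have NKgt: "N (K (g v) t) = (0, (-(a * y / 2)) *\<^sub>R J v, 0)" if "v \<in> BR" for v
  proof -
    have vR: "v \<in> R" using BR(1) that by auto
    have K: "K (g v) t = (0, (-(a/2)) *\<^sub>R v + (-(a * y / 2)) *\<^sub>R J v, 0)"
      using WR[OF vR] h(4)[of v W] by (simp add: K_def lcf_def g_def t_def h inner_commute[of v W] inner_commute[of v "J W"] algebra_simps)
    have "(0::real, (-(a/2)) *\<^sub>R v + (-(a * y / 2)) *\<^sub>R J v, 0::real) \<bullet> t = 0"
      using WR[OF vR] h(4)[of v W] by (simp add: t_def inner_add_left inner_diff_left inner_commute[of "J v" W] inner_commute[of v W])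
    moreover have "(\<Sum>u\<in>BR. ((0::real, (-(a/2)) *\<^sub>R v + (-(a * y / 2)) *\<^sub>R J v, 0::real) \<bullet> g u) *\<^sub>R g u)
        = (-(a/2)) *\<^sub>R g v"
    proof -
      have "(\<Sum>u\<in>BR. ((0::real, (-(a/2)) *\<^sub>R v + (-(a * y / 2)) *\<^sub>R J v, 0::real) \<bullet> g u) *\<^sub>R g u)
          = (\<Sum>u\<in>BR. if v = u then (-(a/2)) *\<^sub>R g v else 0)"
      proof (rule sum.cong[OF refl])
        fix u assume u: "u \<in> BR"
        show "((0::real, (-(a/2)) *\<^sub>R v + (-(a * y / 2)) *\<^sub>R J v, 0::real) \<bullet> g u) *\<^sub>R g u
            = (if v = u then (-(a/2)) *\<^sub>R g v else 0)"
          using BRin[OF that u] TR[OF vR subsetD[OF BR(1) u]]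
          by (cases "v = u") (simp_all add: g_def inner_diff_left zero_prod_def)
      qed
      also have "\<dots> = (-(a/2)) *\<^sub>R g v" using finBR that by simp
      finally show ?thesis .
    qed
    ultimately show ?thesis unfolding K Nform by (simp add: g_def)
  qed
  have nJv: "(norm (J v))\<^sup>2 = 1" if "v \<in> BR" for v
    using BRin[OF that that] h(3)[of v v] by (simp add: power2_norm_eq_inner)
  define A where "A = a\<^sup>2"
  have Ac: "A * (1 + y\<^sup>2 + w) = 1" using a2c by (simp add: A_def c_def)
  have Hexp: "mean_curv J E = (A * (w + 2 * y\<^sup>2) / 2 + real r * (1/2 - A/2),
      (-(A/2 * (1 + real r))) *\<^sub>R W + (-(A * y)) *\<^sub>R J W, -(A * y + real r * (A * y / 2)))"
  proof -
    have "(\<Sum>u\<in>BR. N (K (g u) (g u))) = (\<Sum>u\<in>BR. (1/2 - a\<^sup>2/2, (-(a\<^sup>2/2)) *\<^sub>R W, -(a\<^sup>2 * y / 2)))"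
      by (rule sum.cong[OF refl]) (rule NKgg)
    also have "\<dots> = real r *\<^sub>R (1/2 - a\<^sup>2/2, (-(a\<^sup>2/2)) *\<^sub>R W, -(a\<^sup>2 * y / 2))"
      by (simp only: sum_constant_scaleR cardBR)
    finally have S: "(\<Sum>u\<in>BR. N (K (g u) (g u))) = real r *\<^sub>R (1/2 - a\<^sup>2/2, (-(a\<^sup>2/2)) *\<^sub>R W, -(a\<^sup>2 * y / 2))" .
    show ?thesis unfolding Hsum S NKtt unfolding Ktt A_def
      apply (simp add: algebra_simps)
      apply (simp add: add_divide_distrib scaleR_add_left)
      done
  qed
  have nH: "(norm (mean_curv J E))\<^sup>2 = (A * (w + 2 * y\<^sup>2) / 2 + real r * (1/2 - A/2))\<^sup>2
            + ((A/2 * (1 + real r))\<^sup>2 + (A * y)\<^sup>2) * w + (A * y + real r * (A * y / 2))\<^sup>2"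
    unfolding Hexp n3 norm_WJW[OF assms(1)] w_def[symmetric] by (simp add: power2_eq_square algebra_simps)
  have nII: "sff_norm2 J E = (A * (w + 2 * y\<^sup>2) / 2)\<^sup>2 + ((A/2)\<^sup>2 + (A * y)\<^sup>2) * w + (A * y)\<^sup>2
            + real r * (A * y\<^sup>2 / 4) + real r * (A * y\<^sup>2 / 4)
            + real r * ((1/2 - A/2)\<^sup>2 + (A/2)\<^sup>2 * w + (A * y / 2)\<^sup>2)"
  proof -
    have 1: "(norm (N (K t t)))\<^sup>2 = (A * (w + 2 * y\<^sup>2) / 2)\<^sup>2 + ((A/2)\<^sup>2 + (A * y)\<^sup>2) * w + (A * y)\<^sup>2"
      unfolding NKtt unfolding Ktt n3 norm_WJW[OF assms(1)] w_def[symmetric] A_def by (simp add: power2_eq_square)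
    have 2: "(\<Sum>v\<in>BR. (norm (N (K t (g v))))\<^sup>2) = real r * (A * y\<^sup>2 / 4)"
    proof -
      have "(\<Sum>v\<in>BR. (norm (N (K t (g v))))\<^sup>2) = (\<Sum>v\<in>BR. A * y\<^sup>2 / 4)"
      proof (rule sum.cong[OF refl])
        fix v assume v: "v \<in> BR"
        show "(norm (N (K t (g v))))\<^sup>2 = A * y\<^sup>2 / 4"
          unfolding NKtg[OF v] n3 using nJv[OF v]
          by (simp add: A_def power_mult_distrib power_divide)
      qed
      then show ?thesis by (simp add: cardBR)
    qed
    have 3: "(\<Sum>u\<in>BR. (norm (N (K (g u) t)))\<^sup>2 + (\<Sum>v\<in>BR. (norm (N (K (g u) (g v))))\<^sup>2))
        = real r * (A * y\<^sup>2 / 4) + real r * ((1/2 - A/2)\<^sup>2 + (A/2)\<^sup>2 * w + (A * y / 2)\<^sup>2)"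
    proof -
      have "(\<Sum>u\<in>BR. (norm (N (K (g u) t)))\<^sup>2 + (\<Sum>v\<in>BR. (norm (N (K (g u) (g v))))\<^sup>2))
         = (\<Sum>u\<in>BR. A * y\<^sup>2 / 4 + ((1/2 - A/2)\<^sup>2 + (A/2)\<^sup>2 * w + (A * y / 2)\<^sup>2))"
      proof (rule sum.cong[OF refl])
        fix u assume u: "u \<in> BR"
        have a: "(norm (N (K (g u) t)))\<^sup>2 = A * y\<^sup>2 / 4"
          unfolding NKgt[OF u] n3 using nJv[OF u]
          by (simp add: A_def power_mult_distrib power_divide)
        have "(\<Sum>v\<in>BR. (norm (N (K (g u) (g v))))\<^sup>2) = (\<Sum>v\<in>BR. if u = v then (norm (N (K (g u) (g u))))\<^sup>2 else 0)"
          by (rule sum.cong[OF refl]) (simp add: NKgg0 u)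
        also have "\<dots> = (norm (N (K (g u) (g u))))\<^sup>2" using finBR u by simp
        also have "\<dots> = (1/2 - A/2)\<^sup>2 + (A/2)\<^sup>2 * w + (A * y / 2)\<^sup>2"
          unfolding NKgg[OF u] n3 A_def w_def
          by (simp add: power2_norm_eq_inner[symmetric] power_mult_distrib power_divide)
        finally show "(norm (N (K (g u) t)))\<^sup>2 + (\<Sum>v\<in>BR. (norm (N (K (g u) (g v))))\<^sup>2)
            = A * y\<^sup>2 / 4 + ((1/2 - A/2)\<^sup>2 + (A/2)\<^sup>2 * w + (A * y / 2)\<^sup>2)" using a by simp
      qed
      then show ?thesis by (simp add: cardBR algebra_simps)
    qed
    show ?thesis unfolding IIsum 1 2 3 by (simp add: add.assoc)
  qed
  show ?thesis unfolding nW nH nII using final_alg[OF Ac w0, of "real r"] by simp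
qed


end
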